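(* There is an absolute constant $c>0$ such that for all natural numbers $1\le d\le n$ there exists a partial concept class $\mathbb{H}_{n,d}\subseteq\{0,1,\star\}^{[n]}$ with $d\le\mathrm{LD}(\mathbb{H}_{n,d})\le d+1$ whose SOA disambiguation $\overline{\mathbb{H}_{n,d}}^{\mathrm{SOA}}$ (with respect to the natural ordering $1,2,\dots,n$ of $[n]$) has $\mathrm{VC}\big(\overline{\mathbb{H}_{n,d}}^{\mathrm{SOA}}\big)\ge c\, d\log(n/d)$.
   Context: A partial concept class on $[n]$ is a set $\mathbb{H}\subseteq\{0,1,\star\}^{[n]}$. VC dimension: the largest size of a set $S\subseteq[n]$ such that every $0/1$ pattern on $S$ is realized by some $h\in\mathbb{H}$. Littlestone dimension $\mathrm{LD}(\mathbb{H})$: the largest $d$ such that there is a full binary tree of height $d$, internal nodes $v\in\bigcup_{k<d}\{0,1\}^k$ labelled by points $x_v$, such that for every $y\in\{0,1\}^d$ some $h\in\mathbb{H}$ has $h(x_{y_1\cdots y_{i-1}})=y_i$ for all $i\in[d]$; by convention $\mathrm{LD}(\emptyset)=-1$. For a class $\mathbb{H}$ and $\vec b\in\{0,1,\star\}^k$ let $\mathbb{H}|_{\vec b}=\{h\in\mathbb{H}: h(i)=b_i \text{ for all } i\in[k]\}$ (with $\mathbb{H}|_{()}=\mathbb{H}$). The SOA disambiguation $\overline{\mathbb{H}}^{\mathrm{SOA}}$ is produced iteratively: for $k=1,2,\dots,n$, given the current class (in which all values at points $1,\dots,k-1$ are already in $\{0,1\}$), for every $\vec b\in\{0,1\}^{k-1}$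 choose $c\in\{0,1\}$ maximizing $\mathrm{LD}(\mathbb{H}|_{\vec b c})$ (ties broken in favour of $c=0$), and redefine $h(k):=c$ for every $h\in\mathbb{H}|_{\vec b\star}$. The resulting total class is $\overline{\mathbb{H}}^{\mathrm{SOA}}$. *)

theory Defs
  imports Complex_Main
begin

text \<open>A partial concept on [n] = {1..n} is a function nat => bool option,
  where None encodes the undefined value (star), Some False = 0, Some True = 1,
  and which is None outside {1..n}.\<close>

type_synonym pconcept = "nat \<Rightarrow> bool option"

definition partial_concepts :: "nat \<Rightarrow> pconcept set" where
  "partial_concepts n = {h. \<forall>x. x \<notin> {1..n} \<longrightarrow> h x = None}"

definition shatters :: "pconcept set \<Rightarrow> nat set \<Rightarrow> bool" where
  "shatters H S \<longleftrightarrow> (\<forall>f :: nat \<Rightarrow> bool. \<exists>h\<in>H. \<forall>x\<in>S. h x = Some (f x))"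

definition vc_dim :: "pconcept set \<Rightarrow> nat" where
  "vc_dim H = Max {card S | S. finite S \<and> shatters H S}"

text \<open>Mistake tree of height d: node v (a bool list of length < d) is labelled by
  point x v; every branch y of length d is realised by some concept.\<close>
definition ltree :: "pconcept set \<Rightarrow> nat \<Rightarrow> bool" where
  "ltree H d \<longleftrightarrow> (\<exists>x :: bool list \<Rightarrow> nat. \<forall>y :: bool list. length y = d \<longrightarrow>
      (\<exists>h\<in>H. \<forall>i<d. h (x (take i y)) = Some (y ! i)))"

definition ldim :: "pconcept set \<Rightarrow> int" where
  "ldim H = (if H = {} then -1 else int (Max {d. ltree H d}))"

definition restr :: "pconcept set \<Rightarrow> nat \<Rightarrow> pconcept \<Rightarrow> bool \<Rightarrow> pconcept set" where
  "restr H k h c = {g\<in>H. (\<forall>i\<in>{1..<k}. g i = h i) \<and> g k = Some c}"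

text \<open>SOA choice at point k for prefix pattern of h: True (=1) only if strictly better
  (ties broken in favour of 0 = False).\<close>
definition soa_choice :: "pconcept set \<Rightarrow> nat \<Rightarrow> pconcept \<Rightarrow> bool" where
  "soa_choice H k h \<longleftrightarrow> ldim (restr H k h False) < ldim (restr H k h True)"

definition soa_step :: "pconcept set \<Rightarrow> nat \<Rightarrow> pconcept set" where
  "soa_step H k = (\<lambda>h. if h k = None then h(k := Some (soa_choice H k h)) else h) ` H"

fun soa_iter :: "pconcept set \<Rightarrow> nat \<Rightarrow> pconcept set" where
  "soa_iter H 0 = H"
| "soa_iter H (Suc k) = soa_step (soa_iter H k) (Suc k)"

definition soa_disamb :: "nat \<Rightarrow> pconcept set \<Rightarrow> pconcept set" where
  "soa_disamb n H = soa_iter H n"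

end

theory Submission
  imports Defs
begin

fun pth :: "(bool list \<Rightarrow> nat) \<Rightarrow> nat \<Rightarrow> bool list" where
  "pth x 0 = []"
| "pth x (Suc i) = (let acc = pth x i in
     acc @ [x acc \<notin> {x (take j acc) | j. j < length acc \<and> acc ! j}])"

lemma pth_len[simp]: "length (pth x i) = i"
  by (induction i) (auto simp: Let_def)

lemma pth_take: "j \<le> i \<Longrightarrow> take j (pth x i) = pth x j"
proof (induction i)
  case 0 then show ?case by simp
next
  case (Suc i)
  show ?case
  proof (cases "j = Suc i")
    case True then show ?thesis by (simp add: Let_def)
  next
    case False
    then have "j \<le> i" using Suc.prems by simp
    then show ?thesis using Suc.IH by (simp add: Let_def)
  qed
qed

declare pth.simps(2)[simp del]

lemma pth_nth: "j < i \<Longrightarrow> pth x i ! j = pth x (Suc j) ! j"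
proof -
  assume "j < i"
  then have "take (Suc j) (pth x i) = pth x (Suc j)" by (simp add: pth_take)
  then show ?thesis by (metis lessI nth_take)
qed

definition bt :: "(bool list \<Rightarrow> nat) \<Rightarrow> nat \<Rightarrow> bool" where
  "bt x j = pth x (Suc j) ! j"

lemma bt_eq: "bt x j = (x (pth x j) \<notin> {x (pth x l) | l. l < j \<and> bt x l})"
proof -
  have eq: "\<And>l. l < j \<Longrightarrow> take l (pth x j) = pth x l \<and> pth x j ! l = bt x l"
    using pth_take[of _ j x] pth_nth[of _ j x] unfolding bt_def by auto
  have "{x (take l (pth x j)) | l. l < length (pth x j) \<and> pth x j ! l}
      = {x (pth x l) | l. l < j \<and> bt x l}"
  proof (intro Collect_cong iffI)
    fix v assume "\<exists>l. v = x (take l (pth x j)) \<and> l < length (pth x j) \<and> pth x j ! l"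
    then obtain l where "v = x (take l (pth x j))" "l < j" "pth x j ! l" by auto
    then show "\<exists>l. v = x (pth x l) \<and> l < j \<and> bt x l" using eq by metis
  next
    fix v assume "\<exists>l. v = x (pth x l) \<and> l < j \<and> bt x l"
    then obtain l where "v = x (pth x l)" "l < j" "bt x l" by auto
    then show "\<exists>l. v = x (take l (pth x j)) \<and> l < length (pth x j) \<and> pth x j ! l" using eq by (metis pth_len)
  qed
  moreover have "bt x j = (x (pth x j) \<notin> {x (take l (pth x j)) | l. l < length (pth x j) \<and> pth x j ! l})"
    unfolding bt_def pth.simps(2) Let_def
    by (metis (no_types, lifting) nth_append_length pth_len)
  ultimately show ?thesis by simp
qed

lemma no_ltree:
  assumes H: "\<And>h. h \<in> H \<Longrightarrow> finite {x. h x = Some True} \<and> card {x. h x = Some True} \<le> r"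
    and rk: "r < k"
  shows "\<not> ltree H k"
proof
  assume "ltree H k"
  then obtain x where x: "\<forall>y :: bool list. length y = k \<longrightarrow>
      (\<exists>h\<in>H. \<forall>i<k. h (x (take i y)) = Some (y ! i))" unfolding ltree_def by blast
  from x[rule_format, of "pth x k"] obtain h where hH: "h \<in> H"
    and hy: "\<forall>i<k. h (x (take i (pth x k))) = Some (pth x k ! i)" by auto
  have hv: "h (x (pth x i)) = Some (bt x i)" if "i < k" for i
  proof -
    have "take i (pth x k) = pth x i" using that pth_take[of i k x] by simp
    moreover have "pth x k ! i = bt x i" using that pth_nth[of i k x] unfolding bt_def by simp
    ultimately show ?thesis using hy[rule_format, OF that] by simp
  qed
  have allT: "bt x i" if "i < k" for i
  proof (rule ccontr)
    assume "\<not> bt x i"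
    then obtain l where "l < i" "bt x l" "x (pth x l) = x (pth x i)"
      using bt_eq[of x i] by auto
    then show False using hv[of l] hv[of i] \<open>i < k\<close> \<open>\<not> bt x i\<close> by auto
  qed
  have inj: "inj_on (\<lambda>i. x (pth x i)) {..<k}"
  proof (rule inj_onI)
    fix i j assume ij: "i \<in> {..<k}" "j \<in> {..<k}" "x (pth x i) = x (pth x j)"
    show "i = j"
    proof (rule ccontr)
      assume "i \<noteq> j"
      then have "i < j \<or> j < i" by auto
      then show False
      proof
        assume "i < j" then show False using bt_eq[of x j] allT ij by auto
      next
        assume "j < i" then show False using bt_eq[of x i] allT ij by auto
      qed
    qed
  qed
  have sub: "(\<lambda>i. x (pth x i)) ` {..<k} \<subseteq> {x. h x = Some True}"
    using hv allT by auto
  have "k \<le> card {x. h x = Some True}"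
    using card_mono[OF conjunct1[OF H[OF hH]] sub] card_image[OF inj] by simp
  then show False using H[OF hH] rk by simp
qed

definition Afam :: "nat \<Rightarrow> nat \<Rightarrow> nat set set" where
  "Afam m d = {A. A \<subseteq> {1..m} \<and> card A \<le> d}"

definition Idx :: "nat \<Rightarrow> nat \<Rightarrow> (nat set \<Rightarrow> nat set) \<Rightarrow> (nat set \<times> nat option) set" where
  "Idx m d g = {(A,v). A \<in> Afam m d \<and> (\<forall>s. v = Some s \<longrightarrow> s \<in> g A)}"

definition FF :: "nat \<Rightarrow> (nat set \<Rightarrow> nat set) \<Rightarrow> nat \<Rightarrow> nat set \<times> nat option \<Rightarrow> pconcept" where
  "FF m g k ao = (\<lambda>x. if x \<in> {1..m} then Some (x \<in> fst ao)
      else if 1 \<le> x \<and> x \<le> k then Some (x \<in> g (fst ao))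
      else if snd ao = Some x then Some True else None)"

lemma ldim_empty: "ldim {} = -1" by (simp add: ldim_def)
lemma ldim_ne: "H \<noteq> {} \<Longrightarrow> ldim H \<ge> 0" by (simp add: ldim_def)

lemma choice:
  assumes mk: "m \<le> k" and ao: "ao \<in> Idx m d g" and ns: "snd ao \<noteq> Some (Suc k)"
  shows "soa_choice (FF m g k ` Idx m d g) (Suc k) (FF m g k ao) = (Suc k \<in> g (fst ao))"
proof -
  let ?X = "FF m g k ` Idx m d g"
  have valp: "FF m g k ao' (Suc k) = (if snd ao' = Some (Suc k) then Some True else None)" for ao'
    using mk by (simp add: FF_def)
  have r0: "restr ?X (Suc k) (FF m g k ao) False = {}"
    unfolding restr_def using valp by (auto split: if_splits)
  have agreeA: "fst ao' = fst ao" if "ao' \<in> Idx m d g"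
     "\<forall>i\<in>{1..<Suc k}. FF m g k ao' i = FF m g k ao i" for ao'
  proof -
    have s1: "fst ao' \<subseteq> {1..m}" "fst ao \<subseteq> {1..m}" using that(1) ao
      by (auto simp: Idx_def Afam_def)
    have "x \<in> fst ao' \<longleftrightarrow> x \<in> fst ao" if "x \<in> {1..m}" for x
    proof -
      have "x \<in> {1..<Suc k}" using that mk by auto
      then have "FF m g k ao' x = FF m g k ao x" using \<open>\<forall>i\<in>{1..<Suc k}. _\<close> by blast
      then show ?thesis using that by (simp add: FF_def)
    qed
    then show ?thesis using s1 by blast
  qed
  show ?thesis
  proof (cases "Suc k \<in> g (fst ao)")
    case True
    let ?b = "(fst ao, Some (Suc k))"
    have bI: "?b \<in> Idx m d g" using ao True by (auto simp: Idx_def)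
    have "\<forall>i\<in>{1..<Suc k}. FF m g k ?b i = FF m g k ao i"
      by (auto simp: FF_def)
    then have "FF m g k ?b \<in> restr ?X (Suc k) (FF m g k ao) True"
      unfolding restr_def using bI valp[of ?b] by auto
    then have "ldim (restr ?X (Suc k) (FF m g k ao) True) \<ge> 0" using ldim_ne by blast
    then show ?thesis using True r0 ldim_empty by (simp add: soa_choice_def)
  next
    case False
    have "restr ?X (Suc k) (FF m g k ao) True = {}"
    proof (rule ccontr)
      assume "restr ?X (Suc k) (FF m g k ao) True \<noteq> {}"
      then obtain ao' where a1: "ao' \<in> Idx m d g"
        and a2: "\<forall>i\<in>{1..<Suc k}. FF m g k ao' i = FF m g k ao i"
        and a3: "FF m g k ao' (Suc k) = Some True"
        unfolding restr_def by auto
      have "snd ao' = Some (Suc k)" using a3 valp[of ao'] by (auto split: if_splits)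
      then have "Suc k \<in> g (fst ao')" using a1 by (auto simp: Idx_def)
      then show False using agreeA[OF a1 a2] False by simp
    qed
    then show ?thesis using False r0 ldim_empty by (simp add: soa_choice_def)
  qed
qed

lemma iter: "soa_iter (FF m g 0 ` Idx m d g) k = FF m g k ` Idx m d g"
proof (induction k)
  case 0 then show ?case by simp
next
  case (Suc k)
  let ?I = "Idx m d g"
  let ?X = "FF m g k ` ?I"
  have step: "(if FF m g k ao (Suc k) = None
       then (FF m g k ao)(Suc k := Some (soa_choice ?X (Suc k) (FF m g k ao))) else FF m g k ao)
      = FF m g (Suc k) ao" if ao: "ao \<in> ?I" for ao
  proof (cases "Suc k \<le> m")
    case True
    have "FF m g (Suc k) ao = FF m g k ao"
      using True by (auto simp: FF_def fun_eq_iff)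
    moreover have "FF m g k ao (Suc k) \<noteq> None" using True by (simp add: FF_def)
    ultimately show ?thesis by auto
  next
    case False
    then have mk: "m \<le> k" by simp
    show ?thesis
    proof (cases "snd ao = Some (Suc k)")
      case True
      then have "Suc k \<in> g (fst ao)" using ao by (auto simp: Idx_def)
      then have "FF m g (Suc k) ao = FF m g k ao"
        using True mk by (auto simp: FF_def fun_eq_iff)
      moreover have "FF m g k ao (Suc k) \<noteq> None" using True mk by (simp add: FF_def)
      ultimately show ?thesis by auto
    next
      case False
      have "FF m g k ao (Suc k) = None" using False mk by (simp add: FF_def)
      moreover have "(FF m g k ao)(Suc k := Some (Suc k \<in> g (fst ao))) = FF m g (Suc k) ao"
        using mk by (auto simp: FF_def fun_eq_iff)
      ultimately show ?thesis using choice[OF mk ao False] by simp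
    qed
  qed
  have "soa_iter (FF m g 0 ` ?I) (Suc k) = soa_step ?X (Suc k)" using Suc.IH by simp
  also have "\<dots> = (\<lambda>ao. (if FF m g k ao (Suc k) = None
       then (FF m g k ao)(Suc k := Some (soa_choice ?X (Suc k) (FF m g k ao))) else FF m g k ao)) ` ?I"
    unfolding soa_step_def image_image by simp
  also have "\<dots> = FF m g (Suc k) ` ?I"
    using step by (rule image_cong[OF refl])
  finally show ?case .
qed

lemma main_constr:
  assumes mtn: "m + t \<le> n" and dm: "d \<le> m" and card2: "2^t \<le> card (Afam m d)"
  shows "\<exists>H. H \<subseteq> partial_concepts n \<and> int d \<le> ldim H \<and> ldim H \<le> int d + 1
           \<and> t \<le> vc_dim (soa_disamb n H)"
proof -
  define S where "S = {m+1..m+t}"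
  have finA: "finite (Afam m d)" unfolding Afam_def
    by (rule finite_subset[of _ "Pow {1..m}"]) auto
  have cS: "card (Pow S) = 2^t" unfolding S_def by (simp add: card_Pow)
  obtain f where f1: "f ` Pow S \<subseteq> Afam m d" and f2: "inj_on f (Pow S)"
    using card_le_inj[of "Pow S" "Afam m d"] finA cS card2 unfolding S_def by auto
  define g where "g A = (if A \<in> f ` Pow S then inv_into (Pow S) f A else {})" for A
  have gS: "g A \<subseteq> S" for A
    unfolding g_def using inv_into_into[of _ f "Pow S"] by auto
  have gf: "g (f B) = B" if "B \<subseteq> S" for B
    unfolding g_def using that f2 by (simp add: inv_into_f_f)
  define H where "H = FF m g 0 ` Idx m d g"
  have S_n: "S \<subseteq> {1..n}" using mtn unfolding S_def by auto
  have sub: "H \<subseteq> partial_concepts n"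
  proof
    fix h assume "h \<in> H"
    then obtain ao where ao: "ao \<in> Idx m d g" and h: "h = FF m g 0 ao" unfolding H_def by auto
    show "h \<in> partial_concepts n"
      unfolding partial_concepts_def
    proof (intro CollectI allI impI)
      fix x assume x: "x \<notin> {1..n}"
      have "x \<notin> {1..m}" using x mtn by auto
      moreover have "snd ao \<noteq> Some x"
      proof
        assume "snd ao = Some x"
        then have "x \<in> g (fst ao)" using ao by (auto simp: Idx_def)
        then show False using gS S_n x by blast
      qed
      ultimately show "h x = None" unfolding h FF_def by auto
    qed
  qed
  have ones: "finite {x. h x = Some True} \<and> card {x. h x = Some True} \<le> d + 1" if "h \<in> H" for h
  proof -
    obtain ao where ao: "ao \<in> Idx m d g" and h: "h = FF m g 0 ao" using \<open>h \<in> H\<close> unfolding H_def by auto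
    have A: "fst ao \<subseteq> {1..m}" "card (fst ao) \<le> d" using ao by (auto simp: Idx_def Afam_def)
    have finF: "finite (fst ao)" using A(1) finite_subset by blast
    have sub1: "{x. h x = Some True} \<subseteq> insert (case snd ao of None \<Rightarrow> 0 | Some s \<Rightarrow> s) (fst ao)"
      unfolding h FF_def by (auto split: if_splits)
    have "card (insert (case snd ao of None \<Rightarrow> 0 | Some s \<Rightarrow> s) (fst ao)) \<le> d + 1"
      using A(2) card_insert_le_m1 finF
      by (metis Suc_eq_plus1 card_insert_if le_SucI not_less_eq_eq)
    then show ?thesis using sub1 finF
      by (meson card_mono finite_insert finite_subset le_trans)
  qed
  have nolt: "\<not> ltree H k" if "d + 1 < k" for k
    using no_ltree[of H "d+1" k] ones that by blast
  have lt: "ltree H d"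
    unfolding ltree_def
  proof (intro exI[of _ "\<lambda>v. Suc (length v)"] allI impI)
    fix y :: "bool list" assume ly: "length y = d"
    define A where "A = {j \<in> {1..d}. y ! (j - 1)}"
    have AI: "(A, None) \<in> Idx m d g"
    proof -
      have "A \<subseteq> {1..d}" unfolding A_def by auto
      then have "card A \<le> d" by (metis card_atLeastAtMost card_mono diff_Suc_1 finite_atLeastAtMost)
      then show ?thesis using \<open>A \<subseteq> {1..d}\<close> dm by (auto simp: Idx_def Afam_def)
    qed
    show "\<exists>h\<in>H. \<forall>i<d. h (Suc (length (take i y))) = Some (y ! i)"
    proof (intro bexI[of _ "FF m g 0 (A, None)"] allI impI)
      fix i assume "i < d"
      then show "FF m g 0 (A, None) (Suc (length (take i y))) = Some (y ! i)"
        using ly dm unfolding FF_def A_def by auto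
    next
      show "FF m g 0 (A, None) \<in> H" unfolding H_def using AI by blast
    qed
  qed
  have Hne: "H \<noteq> {}" using lt unfolding ltree_def by (metis empty_iff length_replicate)
  have LS: "{k. ltree H k} \<subseteq> {..d+1}" using nolt by (auto simp: not_less[symmetric])
  have finL: "finite {k. ltree H k}" using LS finite_subset by blast
  have ld1: "int d \<le> ldim H" unfolding ldim_def using Hne lt finL by (simp add: Max_ge)
  have "Max {k. ltree H k} \<le> d + 1" using lt finL LS by (subst Max_le_iff) auto
  then have ld2: "ldim H \<le> int d + 1" unfolding ldim_def using Hne by simp
  have dis: "soa_disamb n H = FF m g n ` Idx m d g"
    unfolding soa_disamb_def H_def by (rule iter)
  have shat: "shatters (soa_disamb n H) S"
    unfolding shatters_def
  proof
    fix fb :: "nat \<Rightarrow> bool"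
    define B where "B = {x \<in> S. fb x}"
    have BS: "B \<subseteq> S" unfolding B_def by auto
    have fBI: "(f B, None) \<in> Idx m d g" using f1 BS by (auto simp: Idx_def)
    show "\<exists>h\<in>soa_disamb n H. \<forall>x\<in>S. h x = Some (fb x)"
    proof (intro bexI[of _ "FF m g n (f B, None)"] ballI)
      fix x assume "x \<in> S"
      then have "x \<notin> {1..m}" "1 \<le> x \<and> x \<le> n" using S_n unfolding S_def by auto
      then show "FF m g n (f B, None) x = Some (fb x)"
        unfolding FF_def using gf[OF BS] \<open>x \<in> S\<close> B_def by auto
    next
      show "FF m g n (f B, None) \<in> soa_disamb n H" using dis fBI by auto
    qed
  qed
  have shsub: "S' \<subseteq> {1..n}" if "shatters (soa_disamb n H) S'" for S'
  proof
    fix x assume x: "x \<in> S'"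
    from that[unfolded shatters_def, rule_format, of "\<lambda>_. True"] obtain h where
      "h \<in> soa_disamb n H" "\<forall>x\<in>S'. h x = Some True" by auto
    then obtain ao where ao: "ao \<in> Idx m d g" and "FF m g n ao x = Some True" using dis x by auto
    then have "x \<in> {1..m} \<or> (1 \<le> x \<and> x \<le> n) \<or> snd ao = Some x"
      unfolding FF_def by (auto split: if_splits)
    moreover have "snd ao = Some x \<Longrightarrow> x \<in> {1..n}" using ao gS S_n by (force simp: Idx_def)
    ultimately show "x \<in> {1..n}" using mtn by auto
  qed
  have finV: "finite {card S' | S'. finite S' \<and> shatters (soa_disamb n H) S'}"
  proof -
    have "{card S' | S'. finite S' \<and> shatters (soa_disamb n H) S'} \<subseteq> card ` Pow {1..n}"
      using shsub by auto
    then show ?thesis using finite_subset by blast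
  qed
  have "card S \<in> {card S' | S'. finite S' \<and> shatters (soa_disamb n H) S'}"
    using shat by (auto intro!: exI[of _ S] simp: S_def)
  then have "card S \<le> vc_dim (soa_disamb n H)" unfolding vc_dim_def using finV by (simp add: Max_ge)
  moreover have "card S = t" unfolding S_def by simp
  ultimately show ?thesis using sub ld1 ld2 by auto
qed

lemma small_case:
  assumes d1: "1 \<le> d" and dn: "d \<le> n" and n8: "n < 8 * d"
  shows "\<exists>H. H \<subseteq> partial_concepts n \<and> int d \<le> ldim H \<and> ldim H \<le> int d + 1 \<and>
       real (vc_dim (soa_disamb n H)) \<ge> 1/8 * real d * ln (real n / real d)"
proof -
  define t where "t = min d (n - d)"
  define m where "m = n - t"
  have mtn: "m + t \<le> n" and dm: "d \<le> m" and tm: "t \<le> m" and td: "t \<le> d"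
    unfolding m_def t_def using dn by auto
  have "Pow {1..t} \<subseteq> Afam m d"
  proof
    fix A assume A: "A \<in> Pow {1..t}"
    then have "card A \<le> t" using card_mono[of "{1..t}" A] by simp
    then show "A \<in> Afam m d" using A tm td unfolding Afam_def by auto
  qed
  then have "card (Pow {1..t}) \<le> card (Afam m d)"
    by (intro card_mono) (auto simp: Afam_def intro: finite_subset[of _ "Pow {1..m}"])
  then have c2: "2^t \<le> card (Afam m d)" by (simp add: card_Pow)
  obtain H where H: "H \<subseteq> partial_concepts n" "int d \<le> ldim H" "ldim H \<le> int d + 1"
     "t \<le> vc_dim (soa_disamb n H)" using main_constr[OF mtn dm c2] by blast
  have dpos: "real d > 0" using d1 by simp
  have q: "real n / real d > 0" using d1 dn by simp
  have l1: "ln (real n / real d) \<le> real n / real d - 1" using ln_le_minus_one[OF q] .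
  have "real d * ln (real n / real d) \<le> real d * (real n / real d - 1)"
    using l1 dpos by (simp add: mult_left_mono)
  also have "\<dots> = real n - real d" using dpos by (simp add: field_simps)
  finally have e1: "real d * ln (real n / real d) \<le> real n - real d" .
  have "real n / real d < 8" using n8 dpos by (simp add: divide_less_eq)
  then have "real d * ln (real n / real d) \<le> real d * 7"
    using l1 dpos by (intro mult_left_mono) auto
  then have "1/8 * real d * ln (real n / real d) \<le> real t"
    using e1 dn unfolding t_def by (auto simp: min_def of_nat_diff)
  also have "real t \<le> real (vc_dim (soa_disamb n H))" using H(4) by simp
  finally show ?thesis using H by blast
qed

lemma large_case:
  assumes d1: "1 \<le> d" and n8: "8 * d \<le> n"
  shows "\<exists>H. H \<subseteq> partial_concepts n \<and> int d \<le> ldim H \<and> ldim H \<le> int d + 1 \<and>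
       real (vc_dim (soa_disamb n H)) \<ge> 1/8 * real d * ln (real n / real d)"
proof -
  define x2 where "x2 = real n / (2 * real d)"
  define z where "z = real d * ln x2"
  define t where "t = nat \<lfloor>z\<rfloor>"
  define m where "m = n - t"
  have dpos: "real d > 0" using d1 by simp
  have x24: "x2 \<ge> 4" unfolding x2_def using n8 dpos by (simp add: le_divide_eq)
  have lnx: "ln x2 \<le> x2 - 1" using ln_le_minus_one x24 by simp
  have ln4: "1 \<le> ln (4::real)"
  proof -
    have "exp 1 \<le> (4::real)" using exp_le by simp
    then show ?thesis by (metis exp_gt_zero ln_exp ln_le_cancel_iff zero_less_numeral)
  qed
  have lnx4: "ln 4 \<le> ln x2" using x24 by simp
  have z1: "z \<ge> 1"
  proof -
    have "1 \<le> ln x2" using ln4 lnx4 by linarith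
    moreover have "(1::real) \<le> real d" using d1 by simp
    ultimately show ?thesis unfolding z_def using mult_mono[of 1 "real d" 1 "ln x2"] by simp
  qed
  have zle: "z \<le> real n / 2 - real d"
  proof -
    have "z \<le> real d * (x2 - 1)" unfolding z_def using lnx dpos by (simp add: mult_left_mono)
    also have "\<dots> = real n / 2 - real d" unfolding x2_def using dpos by (simp add: field_simps)
    finally show ?thesis .
  qed
  have tz: "real t \<le> z" unfolding t_def using z1 by simp
  have tz2: "real t \<ge> z / 2"
  proof -
    have a: "real t = of_int \<lfloor>z\<rfloor>" unfolding t_def using z1 by simp
    have b: "of_int \<lfloor>z\<rfloor> > z - 1" by linarith
    have c: "of_int \<lfloor>z\<rfloor> \<ge> (1::real)" using z1 by (simp add: le_floor_iff)
    show ?thesis using a b c by linarith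
  qed
  have "real t + real d \<le> real n / 2" using tz zle by linarith
  then have tdn: "t + d \<le> n" and mreal: "real m \<ge> real n / 2 + real d"
    unfolding m_def by (auto simp: of_nat_diff)
  have mtn: "m + t \<le> n" and dm: "d \<le> m" unfolding m_def using tdn by auto
  have c2: "2^t \<le> card (Afam m d)"
  proof -
    have finP: "finite (Afam m d)" unfolding Afam_def
      by (rule finite_subset[of _ "Pow {1..m}"]) auto
    have sb: "{A. A \<subseteq> {1..m} \<and> card A = d} \<subseteq> Afam m d" unfolding Afam_def by auto
    have "card {A. A \<subseteq> {1..m} \<and> card A = d} = m choose d" using n_subsets[of "{1..m}" d] by simp
    then have "m choose d \<le> card (Afam m d)"
      using card_mono[OF finP sb] by simp
    then have r1: "real (m choose d) \<le> real (card (Afam m d))" by simp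
    have r2: "(real m / real d) ^ d \<le> real (m choose d)" using binomial_ge_n_over_k_pow_k[OF dm] by simp
    have "real n / 2 \<le> real m" using mreal dpos by linarith
    then have "real n / 2 / real d \<le> real m / real d" using dpos by (intro divide_right_mono) auto
    moreover have "x2 = real n / 2 / real d" unfolding x2_def by simp
    ultimately have "x2 \<le> real m / real d" by simp
    then have r3: "x2 ^ d \<le> (real m / real d) ^ d" using x24 by (intro power_mono) auto
    have r4: "exp z = x2 ^ d" unfolding z_def using x24
      by (simp add: exp_of_nat_mult)
    have r5: "(2::real) ^ t \<le> exp 1 ^ t"
      using exp_ge_add_one_self[of 1] by (intro power_mono) auto
    have r6: "exp 1 ^ t = exp (real t)" using exp_of_nat_mult[of t "1::real"] by simp
    have "exp (real t) \<le> exp z" using tz by simp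
    then have "(2::real) ^ t \<le> real (m choose d)" using r2 r3 r4 r5 r6 by linarith
    then have "real (2 ^ t) \<le> real (m choose d)" by simp
    then have "2 ^ t \<le> m choose d" by (simp only: of_nat_le_iff)
    then show ?thesis using \<open>m choose d \<le> card (Afam m d)\<close> by linarith
  qed
  obtain H where H: "H \<subseteq> partial_concepts n" "int d \<le> ldim H" "ldim H \<le> int d + 1"
     "t \<le> vc_dim (soa_disamb n H)" using main_constr[OF mtn dm c2] by blast
  have "real n / real d = 2 * x2" unfolding x2_def using dpos by simp
  then have "ln (real n / real d) = ln 2 + ln x2" using x24 by (simp add: ln_mult)
  moreover have "ln 2 \<le> ln x2" using x24 by simp
  ultimately have "ln (real n / real d) \<le> 2 * ln x2" by simp
  then have "real d * ln (real n / real d) \<le> 2 * z" unfolding z_def using dpos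
    by (metis mult.left_commute mult_left_mono less_imp_le)
  moreover have "ln (real n / real d) \<ge> 0" using \<open>ln (real n / real d) = ln 2 + ln x2\<close> x24 by simp
  then have "real d * ln (real n / real d) \<ge> 0" using dpos by simp
  ultimately have "1/8 * real d * ln (real n / real d) \<le> real t" using tz2 by linarith
  also have "real t \<le> real (vc_dim (soa_disamb n H))" using H(4) by simp
  finally show ?thesis using H by blast
qed

theorem theorem1p9:
  shows "\<exists>c::real. c > 0 \<and> (\<forall>n d :: nat. 1 \<le> d \<and> d \<le> n \<longrightarrow>
    (\<exists>H. H \<subseteq> partial_concepts n \<and> int d \<le> ldim H \<and> ldim H \<le> int d + 1 \<and>
       real (vc_dim (soa_disamb n H)) \<ge> c * real d * ln (real n / real d)))"
proof (intro exI[of _ "1/8"] conjI allI impI)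
  fix n d :: nat assume a: "1 \<le> d \<and> d \<le> n"
  show "\<exists>H. H \<subseteq> partial_concepts n \<and> int d \<le> ldim H \<and> ldim H \<le> int d + 1 \<and>
       real (vc_dim (soa_disamb n H)) \<ge> 1/8 * real d * ln (real n / real d)"
  proof (cases "n < 8 * d")
    case True then show ?thesis using small_case a by blast
  next
    case False then show ?thesis using large_case a by simp
  qed
qed simp

end
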